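(* Assume $\eta_1\le\frac{1}{4k(T_1+1)}$, $0<r\le\frac{\eta_1}{200}$ and $k>8d^3$. With probability at least $1-4e^{-d}-4e^{-m/36}$, for all $0\le t\le T_1$ and all $i\in\mathcal{W}_0^-\cap\mathcal{A}^-$: (1) $o_2\cdot w_i^{(t)}\ge\frac{t\eta_1}{9}$; (2) $o_j\cdot w_i^{(t)}\le r$ for all $j\ne 2$; and (3) $p_i^{(t)}(x)=o_2$ for every $x\in S_1^-$.
   Context: Fix $n\ge1$, $d\ge3$ and orthonormal $o_1,\dots,o_d\in\mathbb{R}^d$. Inputs are $x=(x[1],\dots,x[n])\in\mathbb{R}^{nd}$ with $x[j]\in\mathbb{R}^d$. The distribution $\mathcal{D}$ on $\mathbb{R}^{nd}\times\{\pm1\}$: $y$ uniform on $\{\pm1\}$; given $y=1$, an index $j_+$ uniform on $\{1,\dots,n\}$ is drawn, $x[j_+]=o_1$, and for $j\ne j_+$ independently $x[j]=o_{i_j}$, $i_j$ uniform on $\{3,\dots,d\}$; given $y=-1$, the same with $o_2$ instead of $o_1$. Network $N_{(W,a)}(x)=\sum_{i=1}^k a_i\max_j\sigma(w_i\cdot x[j])$, $\sigma(z)=\max\{0,z\}$, $w_i$ rows of $W\in\mathbb{R}^{k\times d}$. Loss $\ell(z)=\log(1+e^{-z})$. $S$ consists of $m$ i.i.d. samples from $\mathcal{D}$; $S_1$ is its first $\lceil m/2\rceil$ samples, $m_1=|S_1|$, $S_1^-=\{x:(x,-1)\in S_1\}$, $\mathcal{L}_1(W,a)=\frac1{m_1}\sum_{(x,y)\in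 S_1}\ell(yN_{(W,a)}(x))$. Initialization: rows $w_i^{(0)}$ independent uniform on the sphere of radius $r$ in $\mathbb{R}^d$, $a_i^{(0)}$ independent uniform on $\{\pm1\}$, independent of $W^{(0)}$. Iterates $W^{(t)}=W^{(t-1)}-\eta_1\nabla_W\mathcal{L}_1(W^{(t-1)},a^{(0)})$, $t=1,\dots,T_1$. $p_i^{(t)}(x)=x[j^*]$ with $j^*\in\arg\max_j w_i^{(t)}\cdot x[j]$ if $w_i^{(t)}\cdot x[j^*]>0$, else $0$; gradients use $\frac{\partial}{\partial w_i}\max_j\sigma(w_i\cdot x[j])=p_i(x)$. Sets $\mathcal{A}^-=\{i:a_i^{(0)}=-1\}$, $\mathcal{W}_0^-=\{i:\arg\max_{l\in\{2,3,\dots,d\}}w_i^{(0)}\cdot o_l=2,\ w_i^{(0)}\cdot o_2>0\}$. *)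

theory Defs
  imports "HOL-Probability.Probability"
begin

text \<open>Inputs x are functions nat => 'a, meaningful on indices 1..n (value 0 elsewhere).
  Neurons are indexed 1..k; W is a function nat => 'a (row i = W i); a :: nat => real.
  Samples are indexed 1..m; a sample set S is a function nat => (input, label).\<close>

definition relu :: "real \<Rightarrow> real" where
  "relu z = max 0 z"

definition logloss :: "real \<Rightarrow> real" where
  "logloss z = ln (1 + exp (- z))"

definition logloss' :: "real \<Rightarrow> real" where
  "logloss' z = - 1 / (1 + exp z)"

definition net :: "nat \<Rightarrow> nat \<Rightarrow> (nat \<Rightarrow> 'a::euclidean_space) \<Rightarrow> (nat \<Rightarrow> real) \<Rightarrow> (nat \<Rightarrow> 'a) \<Rightarrow> real" where
  "net n k W a x = (\<Sum>i=1..k. a i * Max ((\<lambda>j. relu (W i \<bullet> x j)) ` {1..n}))"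

text \<open>The selected patch: the smallest index attaining the maximum of w . x[j]
  (tie-breaking convention), returned if the maximal value is positive, otherwise 0.\<close>
definition patch :: "nat \<Rightarrow> 'a::euclidean_space \<Rightarrow> (nat \<Rightarrow> 'a) \<Rightarrow> 'a" where
  "patch n w x =
     (let jstar = (LEAST j. j \<in> {1..n} \<and> w \<bullet> x j = Max ((\<lambda>j'. w \<bullet> x j') ` {1..n}))
      in if w \<bullet> x jstar > 0 then x jstar else 0)"

definition half_size :: "nat \<Rightarrow> nat" where
  "half_size m = nat \<lceil>real m / 2\<rceil>"

text \<open>Gradient of L_1 with respect to w_i (using d/dw_i max_j relu(w_i . x[j]) = p_i(x)).\<close>
definition grad_L1 :: "nat \<Rightarrow> nat \<Rightarrow> nat \<Rightarrow> (nat \<Rightarrow> (nat \<Rightarrow> 'a::euclidean_space) \<times> real)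
     \<Rightarrow> (nat \<Rightarrow> 'a) \<Rightarrow> (nat \<Rightarrow> real) \<Rightarrow> nat \<Rightarrow> 'a" where
  "grad_L1 n k m S W a i =
     (1 / real (half_size m)) *\<^sub>R
       (\<Sum>s=1..half_size m.
          (logloss' (snd (S s) * net n k W a (fst (S s))) * snd (S s) * a i) *\<^sub>R patch n (W i) (fst (S s)))"

text \<open>Gradient descent iterates W^(t) on L_1 with a fixed at a^(0).\<close>
fun gd_iter :: "nat \<Rightarrow> nat \<Rightarrow> nat \<Rightarrow> real \<Rightarrow> (nat \<Rightarrow> (nat \<Rightarrow> 'a::euclidean_space) \<times> real)
     \<Rightarrow> (nat \<Rightarrow> 'a) \<Rightarrow> (nat \<Rightarrow> real) \<Rightarrow> nat \<Rightarrow> (nat \<Rightarrow> 'a)" where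
  "gd_iter n k m eta S W0 a 0 = W0"
| "gd_iter n k m eta S W0 a (Suc t) =
     (let W = gd_iter n k m eta S W0 a t in (\<lambda>i. W i - eta *\<^sub>R grad_L1 n k m S W a i))"

definition data_dist :: "nat \<Rightarrow> nat \<Rightarrow> (nat \<Rightarrow> 'a::euclidean_space) \<Rightarrow> ((nat \<Rightarrow> 'a) \<times> real) pmf" where
  "data_dist n d ob =
     do { y \<leftarrow> pmf_of_set {1, -1::real};
          jp \<leftarrow> pmf_of_set {1..n};
          idx \<leftarrow> Pi_pmf {1..n} 3 (\<lambda>_. pmf_of_set {3..d});
          return_pmf ((\<lambda>j. if j \<in> {1..n} then (if j = jp then (if y = 1 then ob 1 else ob 2) else ob (idx j)) else 0), y) }"

definition sample_dist :: "nat \<Rightarrow> nat \<Rightarrow> nat \<Rightarrow> (nat \<Rightarrow> 'a::euclidean_space)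
     \<Rightarrow> (nat \<Rightarrow> (nat \<Rightarrow> 'a) \<times> real) pmf" where
  "sample_dist n d m ob = Pi_pmf {1..m} (\<lambda>_. 0, 0) (\<lambda>_. data_dist n d ob)"

text \<open>Uniform distribution on the sphere of radius r: the radial projection of the
  uniform distribution on the unit ball.\<close>
definition sphere_unif :: "real \<Rightarrow> 'a::euclidean_space measure" where
  "sphere_unif r = distr (uniform_measure lborel (ball 0 1)) borel (\<lambda>x. r *\<^sub>R (x /\<^sub>R norm x))"

definition init_W_dist :: "nat \<Rightarrow> real \<Rightarrow> (nat \<Rightarrow> 'a::euclidean_space) measure" where
  "init_W_dist k r = PiM {1..k} (\<lambda>_. sphere_unif r)"

definition init_a_dist :: "nat \<Rightarrow> (nat \<Rightarrow> real) pmf" where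
  "init_a_dist k = Pi_pmf {1..k} 1 (\<lambda>_. pmf_of_set {-1, 1})"

definition joint_dist :: "nat \<Rightarrow> nat \<Rightarrow> nat \<Rightarrow> nat \<Rightarrow> real \<Rightarrow> (nat \<Rightarrow> 'a::euclidean_space)
     \<Rightarrow> ((nat \<Rightarrow> (nat \<Rightarrow> 'a) \<times> real) \<times> (nat \<Rightarrow> 'a) \<times> (nat \<Rightarrow> real)) measure" where
  "joint_dist n d m k r ob =
     measure_pmf (sample_dist n d m ob) \<Otimes>\<^sub>M (init_W_dist k r \<Otimes>\<^sub>M measure_pmf (init_a_dist k))"

definition S1_neg :: "nat \<Rightarrow> (nat \<Rightarrow> (nat \<Rightarrow> 'a) \<times> real) \<Rightarrow> (nat \<Rightarrow> 'a) set" where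
  "S1_neg m S = {fst (S s) | s. s \<in> {1..half_size m} \<and> snd (S s) = -1}"

definition A_neg :: "nat \<Rightarrow> (nat \<Rightarrow> real) \<Rightarrow> nat set" where
  "A_neg k a = {i \<in> {1..k}. a i = -1}"

text \<open>W_0^-: the arg max over l in {2..d} of w_i . o_l is (uniquely) 2, and w_i . o_2 > 0.\<close>
definition W0_neg :: "nat \<Rightarrow> nat \<Rightarrow> (nat \<Rightarrow> 'a::euclidean_space) \<Rightarrow> (nat \<Rightarrow> 'a) \<Rightarrow> nat set" where
  "W0_neg k d ob W0 = {i \<in> {1..k}. (\<forall>l\<in>{3..d}. W0 i \<bullet> ob l < W0 i \<bullet> ob 2) \<and> W0 i \<bullet> ob 2 > 0}"

end

theory Submission imports Defs begin


lemma patch_cases: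
  assumes "n \<ge> 1"
  shows "patch n w x = 0 \<or> (\<exists>j\<in>{1..n}. patch n w x = x j)"
proof -
  define M where "M = Max ((\<lambda>j'. w \<bullet> x j') ` {1..n})"
  have "M \<in> (\<lambda>j'. w \<bullet> x j') ` {1..n}" unfolding M_def using assms by (intro Max_in) auto
  then obtain j0 where j0: "j0 \<in> {1..n}" "w \<bullet> x j0 = M" by auto
  define js where "js = (LEAST j. j \<in> {1..n} \<and> w \<bullet> x j = M)"
  have "js \<in> {1..n} \<and> w \<bullet> x js = M" unfolding js_def by (rule LeastI[of _ j0]) (use j0 in auto)
  then show ?thesis unfolding patch_def Let_def M_def[symmetric] js_def[symmetric] by auto
qed

lemma patch_eq:
  assumes "jp \<in> {1..n}" "w \<bullet> x jp > 0" "\<forall>j\<in>{1..n}. j \<noteq> jp \<longrightarrow> w \<bullet> x j < w \<bullet> x jp"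
  shows "patch n w x = x jp"
proof -
  have M: "Max ((\<lambda>j'. w \<bullet> x j') ` {1..n}) = w \<bullet> x jp"
    using assms by (intro Max_eqI) (auto intro: less_imp_le)
  have L: "(LEAST j. j \<in> {1..n} \<and> w \<bullet> x j = w \<bullet> x jp) = jp"
  proof (rule Least_equality)
    show "jp \<in> {1..n} \<and> w \<bullet> x jp = w \<bullet> x jp" using assms by auto
    fix y assume "y \<in> {1..n} \<and> w \<bullet> x y = w \<bullet> x jp"
    then have "y = jp" using assms(3) by force
    then show "jp \<le> y" by simp
  qed
  show ?thesis unfolding patch_def Let_def M L using assms by simp
qed

lemma logloss'_neg: "logloss' z < 0"
  unfolding logloss'_def by (simp add: add_pos_pos)

lemma logloss'_ge: "logloss' z \<ge> -1"
  unfolding logloss'_def by (simp add: add_pos_pos)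

lemma logloss'_abs: "\<bar>logloss' z\<bar> \<le> 1"
  using logloss'_neg[of z] logloss'_ge[of z] by linarith

lemma net_bound:
  assumes "\<forall>j\<in>{1..n}. norm (x j) \<le> 1" "\<forall>i\<in>{1..k}. \<bar>a i\<bar> \<le> 1" "n \<ge> 1"
  shows "\<bar>net n k V a x\<bar> \<le> (\<Sum>i=1..k. norm (V i))"
proof -
  have b: "\<bar>a i * Max ((\<lambda>j. relu (V i \<bullet> x j)) ` {1..n})\<bar> \<le> norm (V i)" if i: "i \<in> {1..k}" for i
  proof -
    have le: "relu (V i \<bullet> x j) \<le> norm (V i)" if "j \<in> {1..n}" for j
    proof -
      have "\<bar>V i \<bullet> x j\<bar> \<le> norm (V i) * norm (x j)" by (rule Cauchy_Schwarz_ineq2)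
      also have "\<dots> \<le> norm (V i)" using assms(1) that by (simp add: mult_left_le)
      finally show ?thesis unfolding relu_def by auto
    qed
    have ge: "relu (V i \<bullet> x j) \<ge> 0" for j unfolding relu_def by auto
    have fin: "finite ((\<lambda>j. relu (V i \<bullet> x j)) ` {1..n})" "((\<lambda>j. relu (V i \<bullet> x j)) ` {1..n}) \<noteq> {}"
      using assms(3) by auto
    have M1: "Max ((\<lambda>j. relu (V i \<bullet> x j)) ` {1..n}) \<le> norm (V i)"
      using fin le by (subst Max_le_iff) auto
    have M0: "Max ((\<lambda>j. relu (V i \<bullet> x j)) ` {1..n}) \<ge> 0"
      using fin ge assms(3) by (subst Max_ge_iff) auto
    have "\<bar>a i * Max ((\<lambda>j. relu (V i \<bullet> x j)) ` {1..n})\<bar> = \<bar>a i\<bar> * Max ((\<lambda>j. relu (V i \<bullet> x j)) ` {1..n})"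
      using M0 by (simp add: abs_mult)
    also have "\<dots> \<le> 1 * norm (V i)" using assms(2) i M0 M1 by (intro mult_mono) auto
    finally show ?thesis by simp
  qed
  have "\<bar>net n k V a x\<bar> \<le> (\<Sum>i=1..k. \<bar>a i * Max ((\<lambda>j. relu (V i \<bullet> x j)) ` {1..n})\<bar>)"
    unfolding net_def by (rule sum_abs)
  also have "\<dots> \<le> (\<Sum>i=1..k. norm (V i))" by (intro sum_mono b) auto
  finally show ?thesis .
qed

context
  fixes n d k m T1 :: nat and eta r :: real and ob :: "nat \<Rightarrow> 'a::euclidean_space"
    and S :: "nat \<Rightarrow> (nat \<Rightarrow> 'a) \<times> real" and W0 :: "nat \<Rightarrow> 'a" and a :: "nat \<Rightarrow> real"
  assumes n1: "n \<ge> 1" and d3: "d \<ge> 3"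
    and orth: "\<forall>i\<in>{1..d}. \<forall>j\<in>{1..d}. ob i \<bullet> ob j = (if i = j then 1 else 0)"
    and hS: "\<forall>s\<in>{1..half_size m}. snd (S s) \<in> {1,-1} \<and> (\<exists>jp\<in>{1..n}.
               fst (S s) jp = (if snd (S s) = 1 then ob 1 else ob 2) \<and>
               (\<forall>j\<in>{1..n}. j \<noteq> jp \<longrightarrow> fst (S s) j \<in> ob ` {3..d}))"
    and hcnt: "real (card {s\<in>{1..half_size m}. snd (S s) = -1}) \<ge> real (half_size m) / 3"
    and hm: "half_size m \<ge> 1"
    and hW0: "\<forall>i\<in>{1..k}. norm (W0 i) \<le> r"
    and ha: "\<forall>i\<in>{1..k}. a i \<in> {-1,1}"
    and heta: "eta > 0" and hketa: "real k * eta * (real T1 + 1) \<le> 1/4"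
    and hr: "0 < r" "r \<le> eta / 200"
begin

lemma ob_norm: "l \<in> {1..d} \<Longrightarrow> norm (ob l) = 1"
  using orth by (simp add: norm_eq_sqrt_inner)

lemma x_ob:
  assumes "s \<in> {1..half_size m}" "j \<in> {1..n}"
  shows "\<exists>l\<in>{1..d}. fst (S s) j = ob l \<and> (snd (S s) = 1 \<longrightarrow> l \<noteq> 2)"
proof -
  obtain jp where jp: "jp \<in> {1..n}" "fst (S s) jp = (if snd (S s) = 1 then ob 1 else ob 2)"
    "\<forall>j\<in>{1..n}. j \<noteq> jp \<longrightarrow> fst (S s) j \<in> ob ` {3..d}"
    using hS assms(1) by blast
  show ?thesis
  proof (cases "j = jp")
    case True then show ?thesis using jp d3 by (cases "snd (S s) = 1") force+
  next
    case False then show ?thesis using jp assms(2) by force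
  qed
qed

lemma x_norm: "s \<in> {1..half_size m} \<Longrightarrow> \<forall>j\<in>{1..n}. norm (fst (S s) j) \<le> 1"
  using x_ob ob_norm by fastforce

lemma patch_norm: "s \<in> {1..half_size m} \<Longrightarrow> norm (patch n w (fst (S s))) \<le> 1"
  using patch_cases[OF n1, of w "fst (S s)"] x_norm by auto

lemma grad_norm:
  assumes i: "i \<in> {1..k}"
  shows "norm (grad_L1 n k m S V a i) \<le> 1"
proof -
  let ?c = "\<lambda>s. logloss' (snd (S s) * net n k V a (fst (S s))) * snd (S s) * a i"
  have c: "\<bar>?c s\<bar> \<le> 1" if "s \<in> {1..half_size m}" for s
  proof -
    have "snd (S s) \<in> {1,-1}" "a i \<in> {-1,1}" using hS that ha i by auto
    then have "\<bar>snd (S s)\<bar> = 1" "\<bar>a i\<bar> = 1" by auto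
    then show ?thesis using logloss'_abs by (simp add: abs_mult)
  qed
  have "norm (\<Sum>s=1..half_size m. ?c s *\<^sub>R patch n (V i) (fst (S s))) \<le>
        (\<Sum>s=1..half_size m. norm (?c s *\<^sub>R patch n (V i) (fst (S s))))"
    by (rule norm_sum)
  also have "\<dots> \<le> (\<Sum>s=1..half_size m. 1)"
  proof (intro sum_mono)
    fix s assume s: "s \<in> {1..half_size m}"
    show "norm (?c s *\<^sub>R patch n (V i) (fst (S s))) \<le> 1"
      using c[OF s] patch_norm[OF s, of "V i"] by (simp add: mult_le_one)
  qed
  finally have "norm (\<Sum>s=1..half_size m. ?c s *\<^sub>R patch n (V i) (fst (S s))) \<le> real (half_size m)" by simp
  then show ?thesis unfolding grad_L1_def using hm by (simp add: divide_simps)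
qed


lemma patch_neg:
  assumes i: "i \<in> W0_neg k d ob W0"
    and V: "ob 2 \<bullet> V \<ge> ob 2 \<bullet> W0 i" "\<forall>l\<in>{1..d}. l \<noteq> 2 \<longrightarrow> ob l \<bullet> V \<le> ob l \<bullet> W0 i"
    and s: "s \<in> {1..half_size m}" "snd (S s) = -1"
  shows "patch n V (fst (S s)) = ob 2"
proof -
  obtain jp where jp: "jp \<in> {1..n}" "fst (S s) jp = (if snd (S s) = 1 then ob 1 else ob 2)"
    "\<forall>j\<in>{1..n}. j \<noteq> jp \<longrightarrow> fst (S s) j \<in> ob ` {3..d}"
    using hS s(1) by blast
  have jp2: "fst (S s) jp = ob 2" using jp(2) s(2) by simp
  have w0: "\<forall>l\<in>{3..d}. W0 i \<bullet> ob l < W0 i \<bullet> ob 2" "W0 i \<bullet> ob 2 > 0"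
    using i unfolding W0_neg_def by auto
  have pos: "V \<bullet> fst (S s) jp > 0"
    using V(1) w0(2) jp2 by (simp add: inner_commute)
  have lt: "\<forall>j\<in>{1..n}. j \<noteq> jp \<longrightarrow> V \<bullet> fst (S s) j < V \<bullet> fst (S s) jp"
  proof (intro ballI impI)
    fix j assume j: "j \<in> {1..n}" "j \<noteq> jp"
    then obtain l where l: "l \<in> {3..d}" "fst (S s) j = ob l" using jp(3) by blast
    have "V \<bullet> ob l = ob l \<bullet> V" by (simp add: inner_commute)
    also have "\<dots> \<le> ob l \<bullet> W0 i" using V(2) l(1) by auto
    also have "\<dots> < W0 i \<bullet> ob 2" using w0(1) l(1) by (simp add: inner_commute)
    also have "\<dots> \<le> V \<bullet> ob 2" using V(1) by (simp add: inner_commute)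
    finally show "V \<bullet> fst (S s) j < V \<bullet> fst (S s) jp" using l jp2 by simp
  qed
  show ?thesis using patch_eq[OF jp(1) pos lt] jp2 by simp
qed

lemma logloss'_le_third: "\<bar>z\<bar> \<le> 1/4 \<Longrightarrow> logloss' z \<le> -1/3"
proof -
  assume "\<bar>z\<bar> \<le> 1/4"
  then have "exp z \<le> 2" using exp_bound_half[of z] by simp
  then show ?thesis unfolding logloss'_def by (simp add: divide_simps add_pos_pos)
qed

lemma gd_Suc: "gd_iter n k m eta S W0 a (Suc t) i =
   gd_iter n k m eta S W0 a t i - eta *\<^sub>R grad_L1 n k m S (gd_iter n k m eta S W0 a t) a i"
  by (simp add: Let_def)

lemma grad_inner:
  "u \<bullet> grad_L1 n k m S V a i = (1 / real (half_size m)) *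
     (\<Sum>s=1..half_size m. (logloss' (snd (S s) * net n k V a (fst (S s))) * snd (S s) * a i) *
        (u \<bullet> patch n (V i) (fst (S s))))"
  unfolding grad_L1_def by (simp add: inner_sum_right)

lemma step:
  fixes t :: nat
  assumes t: "t < T1"
    and IHn: "\<forall>i\<in>{1..k}. norm (gd_iter n k m eta S W0 a t i) \<le> r + real t * eta"
    and IHT: "\<forall>i\<in>W0_neg k d ob W0 \<inter> A_neg k a.
        ob 2 \<bullet> gd_iter n k m eta S W0 a t i \<ge> ob 2 \<bullet> W0 i + real t * eta / 9 \<and>
        (\<forall>l\<in>{1..d}. l \<noteq> 2 \<longrightarrow> ob l \<bullet> gd_iter n k m eta S W0 a t i \<le> ob l \<bullet> W0 i)"
  shows "(\<forall>i\<in>{1..k}. norm (gd_iter n k m eta S W0 a (Suc t) i) \<le> r + real (Suc t) * eta) \<and>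
     (\<forall>i\<in>W0_neg k d ob W0 \<inter> A_neg k a.
        ob 2 \<bullet> gd_iter n k m eta S W0 a (Suc t) i \<ge> ob 2 \<bullet> W0 i + real (Suc t) * eta / 9 \<and>
        (\<forall>l\<in>{1..d}. l \<noteq> 2 \<longrightarrow> ob l \<bullet> gd_iter n k m eta S W0 a (Suc t) i \<le> ob l \<bullet> W0 i))"
proof -
  define V where "V = gd_iter n k m eta S W0 a t"
  have V': "gd_iter n k m eta S W0 a (Suc t) i = V i - eta *\<^sub>R grad_L1 n k m S V a i" for i
    unfolding V_def by (rule gd_Suc)
  have part1: "\<forall>i\<in>{1..k}. norm (gd_iter n k m eta S W0 a (Suc t) i) \<le> r + real (Suc t) * eta"
  proof
    fix i assume i: "i \<in> {1..k}"
    have "norm (V i - eta *\<^sub>R grad_L1 n k m S V a i) \<le> norm (V i) + eta * norm (grad_L1 n k m S V a i)"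
      using norm_triangle_ineq4[of "V i" "eta *\<^sub>R grad_L1 n k m S V a i"] heta by simp
    also have "\<dots> \<le> (r + real t * eta) + eta * 1"
      using IHn i grad_norm[OF i, of V] heta unfolding V_def by (intro add_mono mult_left_mono) auto
    finally show "norm (gd_iter n k m eta S W0 a (Suc t) i) \<le> r + real (Suc t) * eta"
      unfolding V' by (simp add: algebra_simps)
  qed
  have sumV: "(\<Sum>i=1..k. norm (V i)) \<le> 1/4"
  proof -
    have "(\<Sum>i=1..k. norm (V i)) \<le> (\<Sum>i=1..k. r + real t * eta)"
      using IHn unfolding V_def by (intro sum_mono) auto
    also have "\<dots> = real k * (r + real t * eta)" by simp
    also have "\<dots> \<le> real k * (eta * (real T1 + 1))"
    proof (intro mult_left_mono)
      have A: "real t * eta \<le> real T1 * eta" using t heta by (intro mult_right_mono) auto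
      have "r + real t * eta \<le> eta + real T1 * eta" using A hr heta by linarith
      then show "r + real t * eta \<le> eta * (real T1 + 1)" by (simp add: algebra_simps)
    qed simp
    also have "\<dots> \<le> 1/4" using hketa by (simp add: algebra_simps)
    finally show ?thesis .
  qed
  have Nb: "\<bar>net n k V a (fst (S s))\<bar> \<le> 1/4" if s: "s \<in> {1..half_size m}" for s
  proof -
    have "\<forall>i\<in>{1..k}. \<bar>a i\<bar> \<le> 1" using ha by auto
    then show ?thesis using net_bound[OF x_norm[OF s] _ n1, of k a V] sumV by simp
  qed
  have part2: "ob 2 \<bullet> V' i \<ge> ob 2 \<bullet> W0 i + real (Suc t) * eta / 9 \<and>
        (\<forall>l\<in>{1..d}. l \<noteq> 2 \<longrightarrow> ob l \<bullet> V' i \<le> ob l \<bullet> W0 i)"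
    if iT: "i \<in> W0_neg k d ob W0 \<inter> A_neg k a" and V'def: "V' = gd_iter n k m eta S W0 a (Suc t)" for i V'
  proof -
    have ai: "a i = -1" and iW: "i \<in> W0_neg k d ob W0" using iT unfolding A_neg_def by auto
    have IHi: "ob 2 \<bullet> V i \<ge> ob 2 \<bullet> W0 i + real t * eta / 9"
        "\<forall>l\<in>{1..d}. l \<noteq> 2 \<longrightarrow> ob l \<bullet> V i \<le> ob l \<bullet> W0 i"
      using IHT iT unfolding V_def by auto
    have IHi2: "ob 2 \<bullet> V i \<ge> ob 2 \<bullet> W0 i" using IHi(1) heta
      by (smt (verit) divide_nonneg_pos mult_nonneg_nonneg of_nat_0_le_iff)
    have pneg: "patch n (V i) (fst (S s)) = ob 2" if "s \<in> {1..half_size m}" "snd (S s) = -1" for s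
      by (rule patch_neg[OF iW IHi2 IHi(2) that])
    have ppos: "patch n (V i) (fst (S s)) = 0 \<or> (\<exists>l\<in>{1..d}. l \<noteq> 2 \<and> patch n (V i) (fst (S s)) = ob l)"
      if "s \<in> {1..half_size m}" "snd (S s) = 1" for s
      using patch_cases[OF n1, of "V i" "fst (S s)"] x_ob[OF that(1)] that(2) by metis
    let ?c = "\<lambda>s. logloss' (snd (S s) * net n k V a (fst (S s))) * snd (S s) * a i"
    have y: "snd (S s) = 1 \<or> snd (S s) = -1" if "s \<in> {1..half_size m}" for s using hS that by auto
    have hm': "real (half_size m) > 0" using hm by simp
    have oth: "ob l \<bullet> grad_L1 n k m S V a i \<ge> 0" if l: "l \<in> {1..d}" "l \<noteq> 2" for l
    proof -
      have "(\<Sum>s=1..half_size m. ?c s * (ob l \<bullet> patch n (V i) (fst (S s)))) \<ge> 0"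
      proof (intro sum_nonneg)
        fix s assume s: "s \<in> {1..half_size m}"
        show "?c s * (ob l \<bullet> patch n (V i) (fst (S s))) \<ge> 0"
        proof (cases "snd (S s) = 1")
          case True
          have c0: "?c s \<ge> 0" using True ai logloss'_neg by (simp add: less_imp_le)
          have "ob l \<bullet> patch n (V i) (fst (S s)) \<ge> 0"
            using ppos[OF s True] orth l by auto
          then show ?thesis using c0 by simp
        next
          case False
          then have "snd (S s) = -1" using y[OF s] by auto
          then show ?thesis using pneg[OF s] orth l d3 by simp
        qed
      qed
      then show ?thesis unfolding grad_inner using hm' by simp
    qed
    have two: "ob 2 \<bullet> grad_L1 n k m S V a i \<le> - 1/9"
    proof -
      have "(\<Sum>s=1..half_size m. ?c s * (ob 2 \<bullet> patch n (V i) (fst (S s)))) \<le>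
            (\<Sum>s=1..half_size m. (if snd (S s) = -1 then - 1/3 else 0))"
      proof (intro sum_mono)
        fix s assume s: "s \<in> {1..half_size m}"
        show "?c s * (ob 2 \<bullet> patch n (V i) (fst (S s))) \<le> (if snd (S s) = -1 then - 1/3 else 0)"
        proof (cases "snd (S s) = 1")
          case True
          have "ob 2 \<bullet> patch n (V i) (fst (S s)) = 0"
            using ppos[OF s True] orth d3 by auto
          then show ?thesis using True by simp
        next
          case False
          then have yn: "snd (S s) = -1" using y[OF s] by auto
          have "?c s = logloss' (- net n k V a (fst (S s)))" using yn ai by simp
          also have "\<dots> \<le> -1/3" using Nb[OF s] by (intro logloss'_le_third) simp
          finally show ?thesis using pneg[OF s yn] orth d3 yn by simp
        qed
      qed
      also have "\<dots> = - (1/3) * real (card {s\<in>{1..half_size m}. snd (S s) = -1})"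
        by (simp add: sum.If_cases Int_def conj_commute)
      also have "\<dots> \<le> - (1/3) * (real (half_size m) / 3)" using hcnt by simp
      finally have "(1 / real (half_size m)) * (\<Sum>s=1..half_size m. ?c s * (ob 2 \<bullet> patch n (V i) (fst (S s))))
          \<le> (1 / real (half_size m)) * (- (1/3) * (real (half_size m) / 3))"
        using hm' by (intro mult_left_mono) auto
      also have "\<dots> = -1/9" using hm' by (simp add: field_simps)
      finally show ?thesis unfolding grad_inner .
    qed
    have e2: "ob 2 \<bullet> V' i = ob 2 \<bullet> V i - eta * (ob 2 \<bullet> grad_L1 n k m S V a i)"
      unfolding V'def V' by (simp add: inner_diff_right)
    have el: "ob l \<bullet> V' i = ob l \<bullet> V i - eta * (ob l \<bullet> grad_L1 n k m S V a i)" for l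
      unfolding V'def V' by (simp add: inner_diff_right)
    have "eta * (ob 2 \<bullet> grad_L1 n k m S V a i) \<le> eta * (-1/9)" using two heta by (intro mult_left_mono) auto
    then have A: "ob 2 \<bullet> V' i \<ge> ob 2 \<bullet> W0 i + real (Suc t) * eta / 9"
      using e2 IHi(1) by (simp add: algebra_simps add_divide_distrib)
    have B: "\<forall>l\<in>{1..d}. l \<noteq> 2 \<longrightarrow> ob l \<bullet> V' i \<le> ob l \<bullet> W0 i"
    proof (intro ballI impI)
      fix l assume l: "l \<in> {1..d}" "l \<noteq> 2"
      have "eta * (ob l \<bullet> grad_L1 n k m S V a i) \<ge> 0" using oth[OF l] heta by simp
      then show "ob l \<bullet> V' i \<le> ob l \<bullet> W0 i" using el[of l] IHi(2) l by fastforce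
    qed
    show ?thesis using A B by blast
  qed
  show ?thesis using part1 part2 by blast
qed

lemma invariant:
  fixes t :: nat
  assumes "t \<le> T1"
  shows "(\<forall>i\<in>{1..k}. norm (gd_iter n k m eta S W0 a t i) \<le> r + real t * eta) \<and>
     (\<forall>i\<in>W0_neg k d ob W0 \<inter> A_neg k a.
        ob 2 \<bullet> gd_iter n k m eta S W0 a t i \<ge> ob 2 \<bullet> W0 i + real t * eta / 9 \<and>
        (\<forall>l\<in>{1..d}. l \<noteq> 2 \<longrightarrow> ob l \<bullet> gd_iter n k m eta S W0 a t i \<le> ob l \<bullet> W0 i))"
  using assms
proof (induction t)
  case 0
  then show ?case using hW0 by simp
next
  case (Suc t)
  then show ?case using step[of t] by simp
qed

lemma det_main:
  "\<forall>t\<le>T1. \<forall>i \<in> W0_neg k d ob W0 \<inter> A_neg k a.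
                 ob 2 \<bullet> gd_iter n k m eta S W0 a t i \<ge> real t * eta / 9
               \<and> (\<forall>j\<in>{1..d}. j \<noteq> 2 \<longrightarrow> ob j \<bullet> gd_iter n k m eta S W0 a t i \<le> r)
               \<and> (\<forall>x\<in>S1_neg m S. patch n (gd_iter n k m eta S W0 a t i) x = ob 2)"
proof (intro allI impI ballI conjI)
  fix t i assume t: "t \<le> T1" and iT: "i \<in> W0_neg k d ob W0 \<inter> A_neg k a"
  have iW: "i \<in> W0_neg k d ob W0" and ik: "i \<in> {1..k}" using iT unfolding W0_neg_def by auto
  have w02: "W0 i \<bullet> ob 2 > 0" using iW unfolding W0_neg_def by auto
  have I: "ob 2 \<bullet> gd_iter n k m eta S W0 a t i \<ge> ob 2 \<bullet> W0 i + real t * eta / 9"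
          "\<forall>l\<in>{1..d}. l \<noteq> 2 \<longrightarrow> ob l \<bullet> gd_iter n k m eta S W0 a t i \<le> ob l \<bullet> W0 i"
    using invariant[OF t] iT by auto
  show "ob 2 \<bullet> gd_iter n k m eta S W0 a t i \<ge> real t * eta / 9"
    using I(1) w02 by (simp add: inner_commute)
  show "ob j \<bullet> gd_iter n k m eta S W0 a t i \<le> r" if j: "j \<in> {1..d}" "j \<noteq> 2" for j
  proof -
    have "ob j \<bullet> W0 i \<le> norm (ob j) * norm (W0 i)" by (rule norm_cauchy_schwarz)
    also have "\<dots> \<le> r" using ob_norm[OF j(1)] hW0 ik by simp
    finally show ?thesis using I(2) j by fastforce
  qed
  show "patch n (gd_iter n k m eta S W0 a t i) x = ob 2" if x: "x \<in> S1_neg m S" for x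
  proof -
    obtain s where s: "x = fst (S s)" "s \<in> {1..half_size m}" "snd (S s) = -1"
      using x unfolding S1_neg_def by auto
    have "ob 2 \<bullet> gd_iter n k m eta S W0 a t i \<ge> ob 2 \<bullet> W0 i" using I(1) heta
      by (smt (verit) divide_nonneg_pos mult_nonneg_nonneg of_nat_0_le_iff)
    then show ?thesis using patch_neg[OF iW _ I(2) s(2,3)] s(1) by simp
  qed
qed

end



lemma cs_comp: "f \<in> N \<rightarrow>\<^sub>M count_space UNIV \<Longrightarrow> (\<lambda>x. g (f x)) \<in> borel_measurable N"
  by (rule measurable_compose[of f N "count_space UNIV"]) auto

lemma cs_comp': "f \<in> N \<rightarrow>\<^sub>M count_space UNIV \<Longrightarrow> (\<lambda>x. g (f x)) \<in> N \<rightarrow>\<^sub>M count_space UNIV"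
  by (rule measurable_compose[of f N "count_space UNIV"]) auto

lemma patch_meas:
  fixes V :: "'b \<Rightarrow> 'a::euclidean_space"
  assumes [measurable]: "V \<in> borel_measurable N" "\<And>j. (\<lambda>w. X w j) \<in> borel_measurable N"
  shows "(\<lambda>w. patch n (V w) (X w)) \<in> borel_measurable N"
proof -
  let ?M = "\<lambda>w. Max ((\<lambda>j'. V w \<bullet> X w j') ` {1..n})"
  let ?L = "\<lambda>w. LEAST j. j \<in> {1..n} \<and> V w \<bullet> X w j = ?M w"
  have L: "?L \<in> N \<rightarrow>\<^sub>M count_space UNIV" by measurable
  have F: "(\<lambda>w. if V w \<bullet> X w j > 0 then X w j else 0) \<in> borel_measurable N" for j by measurable
  have "(\<lambda>w. (\<lambda>j. if V w \<bullet> X w j > 0 then X w j else 0) (?L w)) \<in> borel_measurable N"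
    by (rule measurable_compose_countable[OF F L])
  then show ?thesis unfolding patch_def Let_def by simp
qed

lemma logloss'_meas[measurable]: "logloss' \<in> borel_measurable borel"
  unfolding logloss'_def by measurable

lemma relu_meas[measurable]: "relu \<in> borel_measurable borel"
  unfolding relu_def by measurable

lemma net_meas:
  fixes V :: "'b \<Rightarrow> nat \<Rightarrow> 'a::euclidean_space"
  assumes [measurable]: "\<And>i. (\<lambda>w. V w i) \<in> borel_measurable N" "\<And>j. (\<lambda>w. X w j) \<in> borel_measurable N"
    "\<And>i. (\<lambda>w. A w i) \<in> borel_measurable N"
  shows "(\<lambda>w. net n k (V w) (A w) (X w)) \<in> borel_measurable N"
  unfolding net_def by measurable

lemma gd_meas:
  fixes W0 :: "'b \<Rightarrow> nat \<Rightarrow> 'a::euclidean_space"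
  assumes W0: "\<And>i. (\<lambda>w. W0 w i) \<in> borel_measurable N"
    and SS: "SS \<in> N \<rightarrow>\<^sub>M count_space UNIV" and A: "A \<in> N \<rightarrow>\<^sub>M count_space UNIV"
  shows "(\<lambda>w. gd_iter n k m eta (SS w) (W0 w) (A w) t i) \<in> borel_measurable N"
proof (induction t arbitrary: i)
  case 0 then show ?case using W0 by simp
next
  case (Suc t)
  note [measurable] = Suc.IH
  have X[measurable]: "(\<lambda>w. fst (SS w s) j) \<in> borel_measurable N" for s j by (rule cs_comp[OF SS])
  have Y[measurable]: "(\<lambda>w. snd (SS w s)) \<in> borel_measurable N" for s by (rule cs_comp[OF SS])
  have Ai[measurable]: "(\<lambda>w. A w i) \<in> borel_measurable N" for i by (rule cs_comp[OF A])
  have Nt[measurable]: "(\<lambda>w. net n k (gd_iter n k m eta (SS w) (W0 w) (A w) t) (A w) (fst (SS w s))) \<in> borel_measurable N" for s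
    by (rule net_meas) measurable
  have P[measurable]: "(\<lambda>w. patch n (gd_iter n k m eta (SS w) (W0 w) (A w) t i) (fst (SS w s))) \<in> borel_measurable N" for s i
    by (rule patch_meas) measurable
  show ?case unfolding gd_iter.simps Let_def grad_L1_def by measurable
qed



lemma data_snd: "map_pmf (\<lambda>z. snd z = -1) (data_dist n d ob) = bernoulli_pmf (1/2)"
proof -
  have "map_pmf (\<lambda>z. snd z = -1) (data_dist n d ob) = map_pmf (\<lambda>y. y = -1) (pmf_of_set {1, -1::real})"
    unfolding data_dist_def by (simp add: map_bind_pmf map_return_pmf) (simp add: map_pmf_def)
  also have "\<dots> = pmf_of_set ((\<lambda>y. y = -1) ` {1, -1::real})"
    by (rule map_pmf_of_set_inj) (auto simp: inj_on_def)
  also have "(\<lambda>y. y = -1) ` {1, -1::real} = UNIV" by auto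
  finally show ?thesis by (simp add: bernoulli_pmf_half_conv_pmf_of_set)
qed

lemma count_binomial:
  assumes "m1 \<le> m"
  shows "map_pmf (\<lambda>S. card {s\<in>{1..m1}. snd (S s) = -1}) (sample_dist n d m ob) = binomial_pmf m1 (1/2)"
proof -
  let ?D = "data_dist n d ob" and ?g = "\<lambda>z::((nat \<Rightarrow> 'a) \<times> real). snd z = -1"
  have "Pi_pmf {1..m1} (\<lambda>_. 0, 0) (\<lambda>_. ?D) = map_pmf (\<lambda>f x. if x \<in> {1..m1} then f x else (\<lambda>_. 0, 0)) (sample_dist n d m ob)"
    unfolding sample_dist_def using assms by (intro Pi_pmf_subset) auto
  then have "map_pmf (\<lambda>S. card {s\<in>{1..m1}. snd (S s) = -1}) (Pi_pmf {1..m1} (\<lambda>_. 0, 0) (\<lambda>_. ?D)) =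
      map_pmf (\<lambda>S. card {s\<in>{1..m1}. snd (S s) = -1}) (sample_dist n d m ob)"
    by (simp add: map_pmf_comp cong: conj_cong)
  moreover have "Pi_pmf {1..m1} False (\<lambda>_. map_pmf ?g ?D) = map_pmf (\<lambda>h. ?g \<circ> h) (Pi_pmf {1..m1} (\<lambda>_. 0, 0) (\<lambda>_. ?D))"
    by (rule Pi_pmf_map) auto
  ultimately have "map_pmf (\<lambda>S. card {s\<in>{1..m1}. snd (S s) = -1}) (sample_dist n d m ob) =
     map_pmf (\<lambda>f. card {s\<in>{1..m1}. f s}) (Pi_pmf {1..m1} False (\<lambda>_. map_pmf ?g ?D))"
    by (simp add: map_pmf_comp)
  also have "\<dots> = binomial_pmf m1 (1/2)"
    unfolding data_snd by (rule binomial_pmf_altdef'[symmetric]) auto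
  finally show ?thesis .
qed

lemma count_bound:
  assumes "m1 \<le> m" "m1 \<ge> 1"
  shows "measure (sample_dist n d m ob) {S. real (card {s\<in>{1..m1}. snd (S s) = -1}) < real m1 / 3}
          \<le> exp (- real m1 / 18)"
proof -
  have "measure (sample_dist n d m ob) {S. real (card {s\<in>{1..m1}. snd (S s) = -1}) < real m1 / 3}
      = measure (binomial_pmf m1 (1/2)) {x. real x < real m1 / 3}"
    by (subst count_binomial[OF assms(1), symmetric]) simp
  also have "\<dots> \<le> measure (binomial_pmf m1 (1/2)) {x. real x / real m1 \<le> 1/2 - 1/6}"
    using assms(2) by (intro measure_pmf.finite_measure_mono) (auto simp: divide_simps)
  also have "\<dots> \<le> exp (- 2 * real m1 * (1/6)\<^sup>2)"
    using binomial_distribution.prob_le'[of "1/2" m1 "1/6"] assms(2)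
    by (simp add: binomial_distribution_def)
  also have "\<dots> = exp (- real m1 / 18)" by (simp add: power2_eq_square)
  finally show ?thesis .
qed


lemma sphere_meas: "(\<lambda>x::'a::euclidean_space. r *\<^sub>R (x /\<^sub>R norm x)) \<in> borel_measurable borel"
  by measurable

lemma sphere_meas': "(\<lambda>x::'a::euclidean_space. r *\<^sub>R (x /\<^sub>R norm x)) \<in> uniform_measure lborel (ball 0 1) \<rightarrow>\<^sub>M borel"
  using sphere_meas by (subst measurable_cong_sets[where M'=borel and N'=borel]) auto

lemma prob_space_sphere: "prob_space (sphere_unif r :: 'a::euclidean_space measure)"
  unfolding sphere_unif_def
proof (rule prob_space.prob_space_distr)
  show "prob_space (uniform_measure lborel (ball (0::'a) 1))"
    by (rule prob_space_uniform_measure) (auto simp: emeasure_ball less_imp_neq[OF unit_ball_vol_pos, symmetric])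
qed (rule sphere_meas')

lemma AE_sphere: "AE x in sphere_unif r. norm (x::'a::euclidean_space) \<le> \<bar>r\<bar>"
  unfolding sphere_unif_def
  apply (subst AE_distr_iff[OF sphere_meas'])
  apply measurable
  apply (rule AE_I2)
  subgoal for x by (cases "x = 0") (auto simp: abs_mult mult.assoc)
  done

lemma data_support:
  assumes "n \<ge> 1" "d \<ge> 3" "z \<in> set_pmf (data_dist n d ob)"
  shows "snd z \<in> {1,-1} \<and> (\<exists>jp\<in>{1..n}. fst z jp = (if snd z = 1 then ob 1 else ob 2) \<and>
           (\<forall>j\<in>{1..n}. j \<noteq> jp \<longrightarrow> fst z j \<in> ob ` {3..d}))"
proof -
  have "z \<in> (\<Union>y\<in>{1,-1::real}. \<Union>jp\<in>{1..n}. \<Union>idx\<in>set_pmf (Pi_pmf {1..n} 3 (\<lambda>_. pmf_of_set {3..d})).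
      {((\<lambda>j. if j \<in> {1..n} then (if j = jp then (if y = 1 then ob 1 else ob 2) else ob (idx j)) else 0), y)})"
    using assms unfolding data_dist_def by (simp only: set_bind_pmf set_return_pmf set_pmf_of_set) auto
  then obtain y jp idx where h: "y \<in> {1,-1}" "jp \<in> {1..n}" "idx \<in> set_pmf (Pi_pmf {1..n} 3 (\<lambda>_. pmf_of_set {3..d}))"
    "z = ((\<lambda>j. if j \<in> {1..n} then (if j = jp then (if y = 1 then ob 1 else ob 2) else ob (idx j)) else 0), y)"
    by blast
  have idx: "\<forall>j\<in>{1..n}. idx j \<in> {3..d}" using h(3) assms(2) by (auto simp: set_Pi_pmf PiE_dflt_def)
  show ?thesis
  proof (intro conjI bexI[of _ jp])
    show "snd z \<in> {1,-1}" using h by simp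
    show "jp \<in> {1..n}" by (rule h(2))
    show "fst z jp = (if snd z = 1 then ob 1 else ob 2)" using h(2,4) by simp
    show "\<forall>j\<in>{1..n}. j \<noteq> jp \<longrightarrow> fst z j \<in> ob ` {3..d}" using h(4) idx by auto
  qed
qed

lemma sample_support:
  assumes "S \<in> set_pmf (sample_dist n d m ob)" "s \<in> {1..m}"
  shows "S s \<in> set_pmf (data_dist n d ob)"
  using assms unfolding sample_dist_def by (auto simp: set_Pi_pmf PiE_dflt_def)

lemma a_support:
  assumes "a \<in> set_pmf (init_a_dist k)" "i \<in> {1..k}"
  shows "a i \<in> {-1,1}"
  using assms unfolding init_a_dist_def by (auto simp: set_Pi_pmf PiE_dflt_def)

lemma comp_meas: "i \<in> {1..k} \<Longrightarrow> (\<lambda>W. W i) \<in> borel_measurable (init_W_dist k r :: (nat \<Rightarrow> 'a::euclidean_space) measure)"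
proof -
  assume i: "i \<in> {1..k}"
  have 1: "(\<lambda>W. W i) \<in> PiM {1..k} (\<lambda>_. sphere_unif r) \<rightarrow>\<^sub>M (sphere_unif r :: 'a measure)"
    by (rule measurable_component_singleton) (use i in simp)
  have s: "sets (sphere_unif r :: 'a measure) = sets borel" by (simp add: sphere_unif_def)
  have eq: "(PiM {1..k} (\<lambda>_. sphere_unif r) \<rightarrow>\<^sub>M (sphere_unif r :: 'a measure)) =
     borel_measurable (PiM {1..k} (\<lambda>_. sphere_unif r))"
    by (rule measurable_cong_sets[OF refl s])
  show ?thesis unfolding init_W_dist_def using 1 unfolding eq .
qed

lemma half_size_props:
  assumes "m \<ge> 1"
  shows "half_size m \<ge> 1" "half_size m \<le> m" "real (half_size m) \<ge> real m / 2"
proof -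
  have c: "real_of_int \<lceil>real m / 2\<rceil> \<ge> real m / 2" by (rule le_of_int_ceiling)
  have c2: "\<lceil>real m / 2\<rceil> \<le> int m" using assms by (simp add: ceiling_le_iff)
  have c3: "\<lceil>real m / 2\<rceil> \<ge> 1" using assms by (simp add: le_ceiling_iff)
  show "half_size m \<ge> 1" unfolding half_size_def using c3 by (subst le_nat_iff) auto
  show "half_size m \<le> m" unfolding half_size_def using c2 by (subst nat_le_iff) auto
  show "real (half_size m) \<ge> real m / 2" unfolding half_size_def using c c3 by simp
qed
theorem corollary5p4:
  fixes n d k m T1 :: nat and eta r :: real and ob :: "nat \<Rightarrow> 'a::euclidean_space"
  assumes "n \<ge> 1" and "d \<ge> 3" and "DIM('a) = d"
    and "\<forall>i\<in>{1..d}. \<forall>j\<in>{1..d}. ob i \<bullet> ob j = (if i = j then 1 else 0)"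
    and "eta \<le> 1 / (4 * real k * (real T1 + 1))"
    and "0 < r" and "r \<le> eta / 200"
    and "real k > 8 * real d ^ 3"
  shows "measure (joint_dist n d m k r ob)
           {(S, W0, a) \<in> space (joint_dist n d m k r ob).
              \<forall>t\<le>T1. \<forall>i \<in> W0_neg k d ob W0 \<inter> A_neg k a.
                 ob 2 \<bullet> gd_iter n k m eta S W0 a t i \<ge> real t * eta / 9
               \<and> (\<forall>j\<in>{1..d}. j \<noteq> 2 \<longrightarrow> ob j \<bullet> gd_iter n k m eta S W0 a t i \<le> r)
               \<and> (\<forall>x\<in>S1_neg m S. patch n (gd_iter n k m eta S W0 a t i) x = ob 2)}
         \<ge> 1 - 4 * exp (- real d) - 4 * exp (- real m / 36)"
proof (cases "m = 0")
  case True
  have "1 - 4 * exp (- real d) - 4 * exp (- real m / 36) \<le> 0"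
  proof -
    have e: "exp (- real m / 36) = 1" using True by simp
    have "exp (- real d) > 0" by simp
    then show ?thesis using e by linarith
  qed
  then show ?thesis by (meson measure_nonneg order_trans)
next
  case False
  then have m1: "m \<ge> 1" by simp
  note hs = half_size_props[OF m1]
  let ?M = "joint_dist n d m k r ob"
  let ?sd = "sample_dist n d m ob" and ?Wd = "init_W_dist k r :: (nat \<Rightarrow> 'a) measure" and ?ad = "init_a_dist k"
  let ?P = "\<lambda>S W0 a. \<forall>t\<le>T1. \<forall>i \<in> W0_neg k d ob W0 \<inter> A_neg k a.
                 ob 2 \<bullet> gd_iter n k m eta S W0 a t i \<ge> real t * eta / 9
               \<and> (\<forall>j\<in>{1..d}. j \<noteq> 2 \<longrightarrow> ob j \<bullet> gd_iter n k m eta S W0 a t i \<le> r)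
               \<and> (\<forall>x\<in>S1_neg m S. patch n (gd_iter n k m eta S W0 a t i) x = ob 2)"
  define E where "E = {(S, W0, a) \<in> space ?M. ?P S W0 a}"
  have hM: "?M = measure_pmf ?sd \<Otimes>\<^sub>M (?Wd \<Otimes>\<^sub>M measure_pmf ?ad)" unfolding joint_dist_def ..
  have psW: "prob_space ?Wd" unfolding init_W_dist_def by (intro prob_space_PiM prob_space_sphere)
  have psM: "prob_space ?M" unfolding hM by (intro prob_space_pair psW prob_space_measure_pmf)
  have kpos: "real k > 0" using assms(8) by (smt (verit) zero_le_power of_nat_0_le_iff)
  have hketa: "real k * eta * (real T1 + 1) \<le> 1/4"
  proof -
    have X: "4 * real k * (real T1 + 1) > 0" using kpos by (simp add: add_pos_pos)
    have "eta * (4 * real k * (real T1 + 1)) \<le> 1" using assms(5) X by (simp add: le_divide_eq)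
    then show ?thesis by (simp add: algebra_simps)
  qed
  have heta: "eta > 0" using assms(6,7) by simp
  have fstm: "fst \<in> ?M \<rightarrow>\<^sub>M count_space UNIV"
  proof -
    have "fst \<in> ?M \<rightarrow>\<^sub>M measure_pmf ?sd" unfolding hM by (rule measurable_fst)
    then show ?thesis using measurable_cong_sets[OF refl sets_measure_pmf_count_space] by blast
  qed
  have am: "(\<lambda>w. snd (snd w)) \<in> ?M \<rightarrow>\<^sub>M count_space UNIV"
  proof -
    have "(\<lambda>w. snd (snd w)) \<in> ?M \<rightarrow>\<^sub>M measure_pmf ?ad" unfolding hM by measurable
    then show ?thesis using measurable_cong_sets[OF refl sets_measure_pmf_count_space] by blast
  qed
  have Wm: "(\<lambda>w. fst (snd w) i) \<in> borel_measurable ?M" for i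
  proof (cases "i \<in> {1..k}")
    case True
    have "(\<lambda>w. fst (snd w)) \<in> ?M \<rightarrow>\<^sub>M ?Wd" unfolding hM by measurable
    from measurable_compose[OF this comp_meas[OF True]] show ?thesis by simp
  next
    case False
    have "fst (snd w) i = undefined" if "w \<in> space ?M" for w
      using that False unfolding hM by (auto simp: space_pair_measure init_W_dist_def space_PiM PiE_def extensional_def)
    then have "((\<lambda>w. fst (snd w) i) \<in> borel_measurable ?M) = ((\<lambda>_. undefined :: 'a) \<in> borel_measurable ?M)"
      by (rule measurable_cong)
    then show ?thesis by simp
  qed
  have gm[measurable]: "(\<lambda>w. gd_iter n k m eta (fst w) (fst (snd w)) (snd (snd w)) t i) \<in> borel_measurable ?M" for t i
    by (rule gd_meas[OF Wm fstm am])
  have pm[measurable]: "Measurable.pred ?M (\<lambda>w. patch n (gd_iter n k m eta (fst w) (fst (snd w)) (snd (snd w)) t i) (fst (fst w s)) \<in> {ob 2})" for t i s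
  proof -
    have "(\<lambda>w. patch n (gd_iter n k m eta (fst w) (fst (snd w)) (snd (snd w)) t i) (fst (fst w s))) \<in> borel_measurable ?M"
      by (rule patch_meas[OF gm]) (rule cs_comp[OF fstm])
    then show ?thesis by measurable
  qed
  have Wm'[measurable]: "(\<lambda>w. fst (snd w) i) \<in> borel_measurable ?M" for i by (rule Wm)
  have am'[measurable]: "(\<lambda>w. snd (snd w) i) \<in> borel_measurable ?M" for i by (rule cs_comp[OF am])
  have ym[measurable]: "(\<lambda>w. snd (fst w s)) \<in> borel_measurable ?M" for s by (rule cs_comp[OF fstm])
  have predEq: "?P (fst w) (fst (snd w)) (snd (snd w)) \<longleftrightarrow>
     (\<forall>t. t \<le> T1 \<longrightarrow> (\<forall>i. (i \<in> {1..k} \<and> (\<forall>l\<in>{3..d}. fst (snd w) i \<bullet> ob l < fst (snd w) i \<bullet> ob 2) \<and>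
         fst (snd w) i \<bullet> ob 2 > 0 \<and> snd (snd w) i = -1) \<longrightarrow>
         ob 2 \<bullet> gd_iter n k m eta (fst w) (fst (snd w)) (snd (snd w)) t i \<ge> real t * eta / 9
       \<and> (\<forall>j\<in>{1..d}. j \<noteq> 2 \<longrightarrow> ob j \<bullet> gd_iter n k m eta (fst w) (fst (snd w)) (snd (snd w)) t i \<le> r)
       \<and> (\<forall>s\<in>{1..half_size m}. snd (fst w s) = -1 \<longrightarrow>
            patch n (gd_iter n k m eta (fst w) (fst (snd w)) (snd (snd w)) t i) (fst (fst w s)) \<in> {ob 2})))"
    for w
    unfolding W0_neg_def A_neg_def S1_neg_def by (auto; blast)
  have "Measurable.pred ?M (\<lambda>w. ?P (fst w) (fst (snd w)) (snd (snd w)))"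
    unfolding predEq by measurable
  moreover have E_alt: "E = {w \<in> space ?M. ?P (fst w) (fst (snd w)) (snd (snd w))}"
    unfolding E_def by (simp only: case_prod_beta' prod.collapse)
  ultimately have Emeas: "E \<in> sets ?M"
    by (simp only: E_alt pred_def)
  define Good where "Good = {S \<in> set_pmf ?sd. real (card {s\<in>{1..half_size m}. snd (S s) = -1}) \<ge> real (half_size m) / 3}"
  define B where "B = {W \<in> space ?Wd. \<forall>i\<in>{1..k}. norm (W i) \<le> r}"
  define C where "C = set_pmf ?ad"
  have Bm: "B \<in> sets ?Wd"
  proof -
    have [measurable]: "(\<lambda>W. W i) \<in> borel_measurable ?Wd" if "i \<in> {1..k}" for i using comp_meas[OF that] .
    have "Measurable.pred ?Wd (\<lambda>W. \<forall>i\<in>{1..k}. norm (W i) \<le> r)"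
      by (intro pred_intros_finite) (auto intro!: borel_measurable_le measurable_compose[OF _ borel_measurable_norm] simp: pred_def)
    then show ?thesis unfolding B_def pred_def by simp
  qed
  have GsubE: "Good \<times> (B \<times> C) \<subseteq> E"
  proof safe
    fix S W0 a assume S: "S \<in> Good" and W: "W0 \<in> B" and a: "a \<in> C"
    have inspace: "(S, W0, a) \<in> space ?M" using W unfolding hM B_def by (simp add: space_pair_measure)
    have hS: "\<forall>s\<in>{1..half_size m}. snd (S s) \<in> {1,-1} \<and> (\<exists>jp\<in>{1..n}.
               fst (S s) jp = (if snd (S s) = 1 then ob 1 else ob 2) \<and>
               (\<forall>j\<in>{1..n}. j \<noteq> jp \<longrightarrow> fst (S s) j \<in> ob ` {3..d}))"
    proof
      fix s assume s: "s \<in> {1..half_size m}"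
      then have "s \<in> {1..m}" using hs by auto
      then have "S s \<in> set_pmf (data_dist n d ob)" using S sample_support unfolding Good_def by blast
      then show "snd (S s) \<in> {1,-1} \<and> (\<exists>jp\<in>{1..n}.
               fst (S s) jp = (if snd (S s) = 1 then ob 1 else ob 2) \<and>
               (\<forall>j\<in>{1..n}. j \<noteq> jp \<longrightarrow> fst (S s) j \<in> ob ` {3..d}))"
        using data_support[OF assms(1,2)] by blast
    qed
    have hcnt: "real (card {s\<in>{1..half_size m}. snd (S s) = -1}) \<ge> real (half_size m) / 3"
      using S unfolding Good_def by simp
    have hW0: "\<forall>i\<in>{1..k}. norm (W0 i) \<le> r" using W unfolding B_def by simp
    have ha: "\<forall>i\<in>{1..k}. a i \<in> {-1,1}" using a a_support unfolding C_def by blast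
    have P: "?P S W0 a"
      by (rule det_main[OF assms(1,2,4) hS hcnt hs(1) hW0 ha heta hketa assms(6,7)])
    show "(S, W0, a) \<in> E" by (simp only: E_alt mem_Collect_eq fst_conv snd_conv) (intro conjI inspace P)
  qed
  have Gm: "Good \<times> (B \<times> C) \<in> sets ?M"
    unfolding hM by (intro pair_measureI Bm) auto
  have eB: "emeasure ?Wd B = 1"
  proof (rule prob_space.emeasure_eq_1_AE[OF psW Bm])
    have "AE W in ?Wd. \<forall>i\<in>{1..k}. norm (W i) \<le> r"
    proof (rule AE_finite_allI, simp)
      fix i assume i: "i \<in> {1..k}"
      show "AE W in ?Wd. norm (W i) \<le> r"
        unfolding init_W_dist_def
        by (rule AE_PiM_component[OF prob_space_sphere i]) (use AE_sphere[of r] assms(6) in simp)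
    qed
    then show "AE W in ?Wd. W \<in> B" unfolding B_def by (auto elim: AE_mp intro: AE_I2)
  qed
  have eC: "emeasure (measure_pmf ?ad) C = 1"
    using emeasure_Int_set_pmf[of ?ad UNIV] unfolding C_def
    by (simp add: measure_pmf.emeasure_space_1[simplified])
  have sfW: "sigma_finite_measure (?Wd \<Otimes>\<^sub>M measure_pmf ?ad)"
    by (intro prob_space_imp_sigma_finite prob_space_pair psW prob_space_measure_pmf)
  have sfa: "sigma_finite_measure (measure_pmf ?ad)"
    by (intro prob_space_imp_sigma_finite prob_space_measure_pmf)
  have "emeasure ?M (Good \<times> (B \<times> C)) = emeasure (measure_pmf ?sd) Good * emeasure (?Wd \<Otimes>\<^sub>M measure_pmf ?ad) (B \<times> C)"
    unfolding hM by (rule sigma_finite_measure.emeasure_pair_measure_Times[OF sfW]) (auto intro!: pair_measureI Bm)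
  also have "emeasure (?Wd \<Otimes>\<^sub>M measure_pmf ?ad) (B \<times> C) = emeasure ?Wd B * emeasure (measure_pmf ?ad) C"
    by (rule sigma_finite_measure.emeasure_pair_measure_Times[OF sfa]) (auto intro: Bm)
  finally have eG: "emeasure ?M (Good \<times> (B \<times> C)) = emeasure (measure_pmf ?sd) Good"
    using eB eC by simp
  have mG: "measure ?M (Good \<times> (B \<times> C)) = measure ?sd Good"
    unfolding measure_def eG ..
  have "measure ?sd Good = measure ?sd {S. real (card {s\<in>{1..half_size m}. snd (S s) = -1}) \<ge> real (half_size m) / 3}"
    unfolding Good_def using measure_Int_set_pmf[of ?sd "{S. real (card {s\<in>{1..half_size m}. snd (S s) = -1}) \<ge> real (half_size m) / 3}"]
    by (simp add: Int_def conj_commute)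
  also have "\<dots> = 1 - measure ?sd {S. real (card {s\<in>{1..half_size m}. snd (S s) = -1}) < real (half_size m) / 3}"
  proof -
    have "{S. real (card {s\<in>{1..half_size m}. snd (S s) = -1}) \<ge> real (half_size m) / 3} =
        space (measure_pmf ?sd) - {S. real (card {s\<in>{1..half_size m}. snd (S s) = -1}) < real (half_size m) / 3}"
      by auto
    then show ?thesis by (simp only:) (rule measure_pmf.prob_compl, simp)
  qed
  also have "\<dots> \<ge> 1 - exp (- real (half_size m) / 18)"
    using count_bound[OF hs(2,1), of n d ob] by simp
  finally have mGood: "measure ?sd Good \<ge> 1 - exp (- real (half_size m) / 18)" .
  have "exp (- real (half_size m) / 18) \<le> exp (- real m / 36)" using hs(3) by simp
  then have "measure ?sd Good \<ge> 1 - 4 * exp (- real d) - 4 * exp (- real m / 36)"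
    using mGood by (smt (verit) exp_gt_zero)
  also have "measure ?sd Good \<le> measure ?M E"
    unfolding mG[symmetric]
    by (rule finite_measure.finite_measure_mono[OF prob_space.finite_measure[OF psM] GsubE Emeas])
  finally show ?thesis unfolding E_def[symmetric] .
qed

end
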